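(* Up to isomorphism there is exactly one $3$-e.c. graph that is the point graph of a partial geometry $pg(s,2,2)$ (with $s\ge2$): namely $s=7$ and the graph is the Latin square graph of the Cayley table of the group $\mathbb{Z}_2^3$, i.e. the graph with vertex set $\mathbb{Z}_2^3\times\mathbb{Z}_2^3$ in which distinct vertices $(a,b)$ and $(a',b')$ are adjacent iff $a=a'$ or $b=b'$ or $a+b=a'+b'$. In particular, if the point graph of some $pg(s,2,2)$ is $3$-e.c., then $s=7$ and it is isomorphic to this graph.
   Context: A partial geometry $pg(s,t,\alpha)$ is an incidence structure of points and lines such that any two distinct points lie on at most one common line, every line contains exactly $s+1$ points, every point lies on exactly $t+1$ lines, and for every point $p$ and line $L$ with $p$ not on $L$ there are exactly $\alpha$ lines through $p$ meeting $L$. The point graph has the points as vertices, two distinct points adjacent iff collinear. (A $pg(s,2,2)$ is equivalent to a Latin square of order $s+1$: points are the cells, and lines are the rows, columns and symbol classes.) A graph with vertex set $V$ is $n$-e.c. if for every pair of disjoint subsets $A,B\subseteq V$ with $|A\cup B|=n$ (either may be empty) there is a vertex $z\notin A\cup B$ adjacent to every vertex of $A$ and to no vertex of $B$. *)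

theory Defs
  imports Main
begin

text \<open>Partial geometry pg(s,t,alpha) with point set P and line set L, lines
  being sets of points (incidence = membership).  As usual for incidence
  structures, the geometry is finite and nonempty.\<close>
definition partial_geometry :: "'p set \<Rightarrow> 'p set set \<Rightarrow> nat \<Rightarrow> nat \<Rightarrow> nat \<Rightarrow> bool" where
  "partial_geometry P L s t \<alpha> \<longleftrightarrow>
     finite P \<and> P \<noteq> {} \<and> finite L \<and>
     (\<forall>M\<in>L. M \<subseteq> P) \<and>
     (\<forall>p\<in>P. \<forall>q\<in>P. p \<noteq> q \<longrightarrow> card {M\<in>L. p \<in> M \<and> q \<in> M} \<le> 1) \<and>
     (\<forall>M\<in>L. card M = s + 1) \<and>
     (\<forall>p\<in>P. card {M\<in>L. p \<in> M} = t + 1) \<and>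
     (\<forall>p\<in>P. \<forall>K\<in>L. p \<notin> K \<longrightarrow> card {M\<in>L. p \<in> M \<and> M \<inter> K \<noteq> {}} = \<alpha>)"

definition point_adj :: "'p set set \<Rightarrow> 'p \<Rightarrow> 'p \<Rightarrow> bool" where
  "point_adj L p q \<longleftrightarrow> p \<noteq> q \<and> (\<exists>M\<in>L. p \<in> M \<and> q \<in> M)"

definition n_ec :: "'a set \<Rightarrow> ('a \<Rightarrow> 'a \<Rightarrow> bool) \<Rightarrow> nat \<Rightarrow> bool" where
  "n_ec V E n \<longleftrightarrow>
     (\<forall>A B. A \<subseteq> V \<and> B \<subseteq> V \<and> A \<inter> B = {} \<and> finite (A \<union> B) \<and> card (A \<union> B) = n \<longrightarrow>
        (\<exists>z\<in>V. z \<notin> A \<union> B \<and> (\<forall>a\<in>A. E z a) \<and> (\<forall>b\<in>B. \<not> E z b)))"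

definition graph_iso :: "'a set \<Rightarrow> ('a \<Rightarrow> 'a \<Rightarrow> bool) \<Rightarrow> 'b set \<Rightarrow> ('b \<Rightarrow> 'b \<Rightarrow> bool) \<Rightarrow> bool" where
  "graph_iso V E W F \<longleftrightarrow>
     (\<exists>f. bij_betw f V W \<and> (\<forall>x\<in>V. \<forall>y\<in>V. E x y \<longleftrightarrow> F (f x) (f y)))"

text \<open>The group Z_2^3, elements as boolean triples, addition = componentwise xor.\<close>
type_synonym z2cube = "bool \<times> bool \<times> bool"

definition z2add :: "z2cube \<Rightarrow> z2cube \<Rightarrow> z2cube" where
  "z2add x y = (case x of (a1, a2, a3) \<Rightarrow> case y of (b1, b2, b3) \<Rightarrow>
                 (a1 \<noteq> b1, a2 \<noteq> b2, a3 \<noteq> b3))"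

definition ls_adj :: "z2cube \<times> z2cube \<Rightarrow> z2cube \<times> z2cube \<Rightarrow> bool" where
  "ls_adj u v = (case u of (a, b) \<Rightarrow> case v of (a', b') \<Rightarrow>
      (a, b) \<noteq> (a', b') \<and> (a = a' \<or> b = b' \<or> z2add a b = z2add a' b'))"

end

theory Submission
  imports Defs
begin


locale pg22 =
  fixes P :: "'p set" and L :: "'p set set" and s :: nat
  assumes pg: "partial_geometry P L s 2 2"
begin

lemma finP: "finite P" and Pne: "P \<noteq> {}" and finL: "finite L" and Lsub: "M \<in> L \<Longrightarrow> M \<subseteq> P"
  and cardM: "M \<in> L \<Longrightarrow> card M = s + 1"
  and cardlines: "p \<in> P \<Longrightarrow> card {M\<in>L. p \<in> M} = 3"
  and cardmeet: "p \<in> P \<Longrightarrow> K \<in> L \<Longrightarrow> p \<notin> K \<Longrightarrow> card {M\<in>L. p \<in> M \<and> M \<inter> K \<noteq> {}} = 2"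
  and cardtwo: "p \<in> P \<Longrightarrow> q \<in> P \<Longrightarrow> p \<noteq> q \<Longrightarrow> card {M\<in>L. p \<in> M \<and> q \<in> M} \<le> 1"
  using pg unfolding partial_geometry_def by auto

lemma two_pts:
  assumes "p \<in> P" "q \<in> P" "p \<noteq> q" "M \<in> L" "N \<in> L" "p \<in> M" "q \<in> M" "p \<in> N" "q \<in> N"
  shows "M = N"
proof -
  have "finite {M\<in>L. p \<in> M \<and> q \<in> M}" using finL by simp
  with cardtwo[OF assms(1-3)] show ?thesis using assms(4-9)
    by (auto simp: card_le_Suc0_iff_eq)
qed

lemma par_card1:
  assumes "p \<in> P" "K \<in> L" "p \<notin> K"
  shows "card {M\<in>L. p \<in> M \<and> M \<inter> K = {}} = 1"
proof -
  have e: "{M\<in>L. p \<in> M \<and> M \<inter> K = {}} = {M\<in>L. p \<in> M} - {M\<in>L. p \<in> M \<and> M \<inter> K \<noteq> {}}" by blast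
  have sub: "{M\<in>L. p \<in> M \<and> M \<inter> K \<noteq> {}} \<subseteq> {M\<in>L. p \<in> M}" by blast
  have fin: "finite {M\<in>L. p \<in> M \<and> M \<inter> K \<noteq> {}}" using finL by simp
  have "card ({M\<in>L. p \<in> M} - {M\<in>L. p \<in> M \<and> M \<inter> K \<noteq> {}}) = 3 - 2"
    using card_Diff_subset[OF fin sub] cardlines[OF assms(1)] cardmeet[OF assms] by simp
  then show ?thesis using e by simp
qed

lemma par_unique:
  assumes "p \<in> P" "K \<in> L" "p \<notin> K" "M \<in> L" "p \<in> M" "M \<inter> K = {}" "N \<in> L" "p \<in> N" "N \<inter> K = {}"
  shows "M = N"
proof -
  obtain X where X: "{M\<in>L. p \<in> M \<and> M \<inter> K = {}} = {X}"
    using par_card1[OF assms(1-3)] by (auto simp: card_1_singleton_iff)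
  have "M \<in> {X}" "N \<in> {X}" using assms(4-9) X[symmetric] by blast+
  then show ?thesis by simp
qed

lemma par_exists:
  assumes "p \<in> P" "K \<in> L"
  shows "\<exists>M. M \<in> L \<and> p \<in> M \<and> (M = K \<or> M \<inter> K = {})"
proof (cases "p \<in> K")
  case True then show ?thesis using assms by auto
next
  case False
  from par_card1[OF assms False] obtain M where "{M\<in>L. p \<in> M \<and> M \<inter> K = {}} = {M}"
    by (auto simp: card_1_singleton_iff)
  then show ?thesis by auto
qed

definition par :: "'p \<Rightarrow> 'p set \<Rightarrow> 'p set" where
  "par p K = (THE M. M \<in> L \<and> p \<in> M \<and> (M = K \<or> M \<inter> K = {}))"

lemma par_uniq:
  assumes "p \<in> P" "K \<in> L" "M \<in> L" "p \<in> M" "M = K \<or> M \<inter> K = {}"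
     "N \<in> L" "p \<in> N" "N = K \<or> N \<inter> K = {}"
  shows "M = N"
proof (cases "p \<in> K")
  case True then show ?thesis using assms by auto
next
  case False
  then have "M \<inter> K = {}" "N \<inter> K = {}" using assms by auto
  then show ?thesis using par_unique[OF assms(1,2) False assms(3,4) _ assms(6,7)] by auto
qed

lemma par_prop:
  assumes "p \<in> P" "K \<in> L"
  shows "par p K \<in> L \<and> p \<in> par p K \<and> (par p K = K \<or> par p K \<inter> K = {})"
proof -
  obtain M where M: "M \<in> L \<and> p \<in> M \<and> (M = K \<or> M \<inter> K = {})" using par_exists[OF assms] by blast
  have "par p K = M" unfolding par_def
    by (rule the_equality) (use M par_uniq[OF assms] in blast)+
  then show ?thesis using M by simp
qed

lemma par_eq:
  assumes "p \<in> P" "K \<in> L" "M \<in> L" "p \<in> M" "M = K \<or> M \<inter> K = {}"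
  shows "par p K = M"
  using par_prop[OF assms(1,2)] par_uniq[OF assms(1,2)] assms(3-5) by blast

lemma par_in: "p \<in> P \<Longrightarrow> K \<in> L \<Longrightarrow> p \<in> par p K"
  and par_L: "p \<in> P \<Longrightarrow> K \<in> L \<Longrightarrow> par p K \<in> L"
  using par_prop by auto

lemma par_same:
  assumes "p \<in> P" "K \<in> L" "q \<in> par p K"
  shows "par q K = par p K"
proof -
  have qP: "q \<in> P" using par_prop[OF assms(1,2)] Lsub assms(3) by blast
  have "par p K = K \<or> par p K \<inter> K = {}" using par_prop[OF assms(1,2)] by simp
  then show ?thesis using par_eq[OF qP assms(2) par_L[OF assms(1,2)] assms(3)] by simp
qed


lemma par_neq:
  assumes "K \<in> L" "K' \<in> L" "K \<noteq> K'" "x \<in> K" "x \<in> K'" "p \<in> P"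
  shows "par p K \<noteq> par p K'"
proof
  assume eq: "par p K = par p K'"
  let ?M = "par p K"
  have xP: "x \<in> P" using Lsub assms by blast
  have h1: "?M = K \<or> ?M \<inter> K = {}" and h2: "?M = K' \<or> ?M \<inter> K' = {}"
    using par_prop[OF assms(6,1)] par_prop[OF assms(6,2)] eq by auto
  have HM: "?M \<in> L" using par_L assms by blast
  show False
  proof (cases "?M = K \<or> ?M = K'")
    case True
    then show False
    proof
      assume "?M = K"
      with h2 have "K = K' \<or> K \<inter> K' = {}" by simp
      then show False using assms(3-5) by blast
    next
      assume "?M = K'"
      with h1 have "K' = K \<or> K' \<inter> K = {}" by simp
      then show False using assms(3-5) by blast
    qed
  next
    case False
    then have d1: "K \<inter> ?M = {}" and d2: "K' \<inter> ?M = {}" using h1 h2 by auto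
    have xM: "x \<notin> ?M" using d1 assms by auto
    have "par x ?M = K" using par_eq[OF xP HM assms(1,4)] d1 by blast
    moreover have "par x ?M = K'" using par_eq[OF xP HM assms(2,5)] d2 by blast
    ultimately show False using assms(3) by simp
  qed
qed

lemma par_meet:
  assumes "K \<in> L" "K' \<in> L" "K \<noteq> K'" "x \<in> K" "x \<in> K'" "p \<in> P" "q \<in> P"
  shows "\<exists>y\<in>P. par y K = par p K \<and> par y K' = par q K'"
proof -
  let ?M = "par p K" and ?N = "par q K'"
  have HM: "?M \<in> L" and HN: "?N \<in> L" using par_L assms by auto
  have "?M \<inter> ?N \<noteq> {}"
  proof
    assume dis: "?M \<inter> ?N = {}"
    have pM: "p \<in> ?M" using par_in assms by blast
    then have pN: "p \<notin> ?N" using dis by blast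
    have ne: "par p K' \<noteq> ?M" using par_neq[OF assms(1-6)] by simp
    have d2: "par p K' \<inter> ?N = {}"
    proof (rule ccontr)
      assume "par p K' \<inter> ?N \<noteq> {}"
      then obtain y where y: "y \<in> par p K'" "y \<in> ?N" by blast
      have "par y K' = par p K'" using par_same[OF assms(6,2) y(1)] .
      moreover have "par y K' = ?N" using par_same[OF assms(7,2) y(2)] .
      ultimately show False using pN par_in[OF assms(6,2)] by simp
    qed
    have "?M = par p K'"
      using par_unique[OF assms(6) HN pN HM pM dis par_L[OF assms(6,2)] par_in[OF assms(6,2)] d2] .
    then show False using ne by simp
  qed
  then obtain y where y: "y \<in> ?M" "y \<in> ?N" by blast
  have "y \<in> P" using y HM Lsub by blast
  moreover have "par y K = ?M" using par_same[OF assms(6,1) y(1)] .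
  moreover have "par y K' = ?N" using par_same[OF assms(7,2) y(2)] .
  ultimately show ?thesis by blast
qed

lemma par_uniq2:
  assumes "K \<in> L" "K' \<in> L" "K \<noteq> K'" "x \<in> K" "x \<in> K'" "p \<in> P" "q \<in> P"
    "par p K = par q K" "par p K' = par q K'"
  shows "p = q"
proof (rule ccontr)
  assume ne: "p \<noteq> q"
  have "q \<in> par p K" using par_in[OF assms(7,1)] assms(8) by simp
  moreover have "q \<in> par p K'" using par_in[OF assms(7,2)] assms(9) by simp
  ultimately have "par p K = par p K'"
    using two_pts[OF assms(6,7) ne par_L[OF assms(6,1)] par_L[OF assms(6,2)] par_in[OF assms(6,1)] _ par_in[OF assms(6,2)]] by blast
  then show False using par_neq[OF assms(1-6)] by simp
qed

end



locale net3 =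
  fixes P :: "'p set" and fr fc fs :: "'p \<Rightarrow> 'q" and z0 :: 'p
  assumes oP: "z0 \<in> P"
  and u_rc: "\<And>p q. p\<in>P \<Longrightarrow> q\<in>P \<Longrightarrow> fr p = fr q \<Longrightarrow> fc p = fc q \<Longrightarrow> p = q"
  and u_rs: "\<And>p q. p\<in>P \<Longrightarrow> q\<in>P \<Longrightarrow> fr p = fr q \<Longrightarrow> fs p = fs q \<Longrightarrow> p = q"
  and u_cs: "\<And>p q. p\<in>P \<Longrightarrow> q\<in>P \<Longrightarrow> fc p = fc q \<Longrightarrow> fs p = fs q \<Longrightarrow> p = q"
  and e_rc: "\<And>p q. p\<in>P \<Longrightarrow> q\<in>P \<Longrightarrow> \<exists>x\<in>P. fr x = fr p \<and> fc x = fc q"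
  and e_rs: "\<And>p q. p\<in>P \<Longrightarrow> q\<in>P \<Longrightarrow> \<exists>x\<in>P. fr x = fr p \<and> fs x = fs q"
  and e_sc: "\<And>p q. p\<in>P \<Longrightarrow> q\<in>P \<Longrightarrow> \<exists>x\<in>P. fs x = fs p \<and> fc x = fc q"
  and quad: "\<And>x y w z. x\<in>P \<Longrightarrow> y\<in>P \<Longrightarrow> w\<in>P \<Longrightarrow> z\<in>P \<Longrightarrow> fr x = fr y \<Longrightarrow> fc x = fc w
     \<Longrightarrow> fs y = fs w \<Longrightarrow> fr z = fr w \<Longrightarrow> fc z = fc y \<Longrightarrow> fs z = fs x"
begin

definition rc where "rc a b = (THE x. x\<in>P \<and> fr x = fr a \<and> fc x = fc b)"
definition rs where "rs a b = (THE x. x\<in>P \<and> fr x = fr a \<and> fs x = fs b)"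
definition sc where "sc a b = (THE x. x\<in>P \<and> fs x = fs a \<and> fc x = fc b)"

lemma rc_prop: assumes "a\<in>P" "b\<in>P" shows "rc a b \<in> P \<and> fr (rc a b) = fr a \<and> fc (rc a b) = fc b"
proof -
  obtain x where x: "x\<in>P" "fr x = fr a" "fc x = fc b" using e_rc[OF assms] by blast
  have "rc a b = x" unfolding rc_def by (rule the_equality) (use x u_rc in auto)
  then show ?thesis using x by simp
qed
lemma rs_prop: assumes "a\<in>P" "b\<in>P" shows "rs a b \<in> P \<and> fr (rs a b) = fr a \<and> fs (rs a b) = fs b"
proof -
  obtain x where x: "x\<in>P" "fr x = fr a" "fs x = fs b" using e_rs[OF assms] by blast
  have "rs a b = x" unfolding rs_def by (rule the_equality) (use x u_rs in auto)
  then show ?thesis using x by simp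
qed
lemma sc_prop: assumes "a\<in>P" "b\<in>P" shows "sc a b \<in> P \<and> fs (sc a b) = fs a \<and> fc (sc a b) = fc b"
proof -
  obtain x where x: "x\<in>P" "fs x = fs a" "fc x = fc b" using e_sc[OF assms] by blast
  have "sc a b = x" unfolding sc_def by (rule the_equality) (use x u_cs in auto)
  then show ?thesis using x by simp
qed
lemma rc_eq: "a\<in>P \<Longrightarrow> b\<in>P \<Longrightarrow> x\<in>P \<Longrightarrow> fr x = fr a \<Longrightarrow> fc x = fc b \<Longrightarrow> rc a b = x"
  using rc_prop u_rc by metis
lemma rs_eq: "a\<in>P \<Longrightarrow> b\<in>P \<Longrightarrow> x\<in>P \<Longrightarrow> fr x = fr a \<Longrightarrow> fs x = fs b \<Longrightarrow> rs a b = x"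
  using rs_prop u_rs by metis
lemma sc_eq: "a\<in>P \<Longrightarrow> b\<in>P \<Longrightarrow> x\<in>P \<Longrightarrow> fs x = fs a \<Longrightarrow> fc x = fc b \<Longrightarrow> sc a b = x"
  using sc_prop u_cs by metis

definition G where "G = {x\<in>P. fr x = fr z0}"
definition gam where "gam p = rc z0 p"
definition sig where "sig p = rs z0 p"
definition kap where "kap p = rs z0 (rc p z0)"
definition psi where "psi x y = rc (sc x z0) y"
definition add (infixl "\<oplus>" 65) where "x \<oplus> y = sig (psi x y)"

lemma GP: "x \<in> G \<Longrightarrow> x \<in> P" and Gr: "x \<in> G \<Longrightarrow> fr x = fr z0"
  unfolding G_def by auto
lemma oG: "z0 \<in> G" using oP unfolding G_def by auto

lemma gam_G: "p\<in>P \<Longrightarrow> gam p \<in> G" unfolding gam_def G_def using rc_prop oP by auto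
lemma sig_G: "p\<in>P \<Longrightarrow> sig p \<in> G" unfolding sig_def G_def using rs_prop oP by auto
lemma kap_G: "p\<in>P \<Longrightarrow> kap p \<in> G" unfolding kap_def G_def using rs_prop rc_prop oP by auto

lemma gam_eq: assumes "p\<in>P" "q\<in>P" shows "gam p = gam q \<longleftrightarrow> fc p = fc q"
proof
  assume "gam p = gam q" then show "fc p = fc q" unfolding gam_def using rc_prop[OF oP assms(1)] rc_prop[OF oP assms(2)] by metis
next
  assume "fc p = fc q" then show "gam p = gam q" unfolding gam_def using rc_prop[OF oP assms(2)] rc_eq[OF oP assms(1)] by metis
qed
lemma sig_eq: assumes "p\<in>P" "q\<in>P" shows "sig p = sig q \<longleftrightarrow> fs p = fs q"
proof
  assume "sig p = sig q" then show "fs p = fs q" unfolding sig_def using rs_prop[OF oP assms(1)] rs_prop[OF oP assms(2)] by metis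
next
  assume "fs p = fs q" then show "sig p = sig q" unfolding sig_def using rs_prop[OF oP assms(2)] rs_eq[OF oP assms(1)] by metis
qed
lemma kap_eq: assumes "p\<in>P" "q\<in>P" shows "kap p = kap q \<longleftrightarrow> fr p = fr q"
proof
  assume h: "kap p = kap q"
  have a: "rc p z0 \<in> P" "fr (rc p z0) = fr p" "fc (rc p z0) = fc z0" using rc_prop[OF assms(1) oP] by auto
  have b: "rc q z0 \<in> P" "fr (rc q z0) = fr q" "fc (rc q z0) = fc z0" using rc_prop[OF assms(2) oP] by auto
  have "fs (rc p z0) = fs (rc q z0)" using h unfolding kap_def using rs_prop[OF oP a(1)] rs_prop[OF oP b(1)] by metis
  then have "rc p z0 = rc q z0" using u_cs a b by metis
  then show "fr p = fr q" using a b by metis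
next
  assume h: "fr p = fr q"
  have "rc p z0 = rc q z0" using rc_prop[OF assms(2) oP] rc_eq[OF assms(1) oP] h by metis
  then show "kap p = kap q" unfolding kap_def by simp
qed

lemma kap_o: "x \<in> G \<Longrightarrow> kap x = z0"
proof -
  assume x: "x \<in> G"
  have "rc x z0 = z0" using rc_eq[OF GP[OF x] oP oP] Gr[OF x] by simp
  moreover have "rs z0 z0 = z0" using rs_eq[OF oP oP oP] by simp
  ultimately show ?thesis unfolding kap_def by simp
qed
lemma gam_id: "x \<in> G \<Longrightarrow> gam x = x"
  unfolding gam_def using rc_eq[OF oP GP GP] Gr by metis
lemma sig_id: "x \<in> G \<Longrightarrow> sig x = x"
  unfolding sig_def using rs_eq[OF oP GP GP] Gr by metis

lemma psi_prop: assumes "x \<in> G" "y \<in> G"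
  shows "psi x y \<in> P \<and> kap (psi x y) = x \<and> gam (psi x y) = y"
proof -
  have xP: "x\<in>P" and yP: "y\<in>P" using assms GP by auto
  have s: "sc x z0 \<in> P" "fs (sc x z0) = fs x" "fc (sc x z0) = fc z0" using sc_prop[OF xP oP] by auto
  have p: "psi x y \<in> P" "fr (psi x y) = fr (sc x z0)" "fc (psi x y) = fc y"
    using rc_prop[OF s(1) yP] unfolding psi_def by auto
  have "rc (psi x y) z0 = sc x z0" using rc_eq[OF p(1) oP s(1)] p s by simp
  moreover have "rs z0 (sc x z0) = x" using rs_eq[OF oP s(1) xP] Gr[OF assms(1)] s by simp
  ultimately have "kap (psi x y) = x" unfolding kap_def by simp
  moreover have "gam (psi x y) = y" unfolding gam_def using rc_eq[OF oP p(1) yP] Gr[OF assms(2)] p by simp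
  ultimately show ?thesis using p by simp
qed

lemma pt_eq: "p\<in>P \<Longrightarrow> q\<in>P \<Longrightarrow> kap p = kap q \<Longrightarrow> gam p = gam q \<Longrightarrow> p = q"
  using kap_eq gam_eq u_rc by metis

lemma psi_kg: "p\<in>P \<Longrightarrow> psi (kap p) (gam p) = p"
  using pt_eq psi_prop kap_G gam_G by metis

lemma add_G: "x \<in> G \<Longrightarrow> y \<in> G \<Longrightarrow> x \<oplus> y \<in> G"
  unfolding add_def using sig_G psi_prop by metis

lemma sig_kg: "p\<in>P \<Longrightarrow> sig p = kap p \<oplus> gam p"
  unfolding add_def using psi_kg by simp

lemma add_o_left: "y \<in> G \<Longrightarrow> z0 \<oplus> y = y"
  using sig_kg kap_o gam_id sig_id GP by metis

lemma add_o_right: assumes "x \<in> G" shows "x \<oplus> z0 = x"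
proof -
  have xP: "x\<in>P" using assms GP by auto
  have s: "sc x z0 \<in> P" "fs (sc x z0) = fs x" "fc (sc x z0) = fc z0" using sc_prop[OF xP oP] by auto
  have "psi x z0 = sc x z0" unfolding psi_def using rc_eq[OF s(1) oP s(1)] s by simp
  moreover have "sig (sc x z0) = x" unfolding sig_def using rs_eq[OF oP s(1) xP] Gr[OF assms] s by simp
  ultimately show ?thesis unfolding add_def by simp
qed

lemma Q: assumes G: "x1 \<in> G" "y1 \<in> G" "x2 \<in> G" "y2 \<in> G" and h: "x1 \<oplus> y2 = x2 \<oplus> y1"
  shows "x1 \<oplus> y1 = x2 \<oplus> y2"
proof -
  note p11 = psi_prop[OF G(1,2)] and p12 = psi_prop[OF G(1,4)] and p21 = psi_prop[OF G(3,2)] and p22 = psi_prop[OF G(3,4)]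
  have "fr (psi x1 y1) = fr (psi x1 y2)" using kap_eq p11 p12 by metis
  moreover have "fc (psi x1 y1) = fc (psi x2 y1)" using gam_eq p11 p21 by metis
  moreover have "fs (psi x1 y2) = fs (psi x2 y1)" using sig_eq p12 p21 h unfolding add_def by metis
  moreover have "fr (psi x2 y2) = fr (psi x2 y1)" using kap_eq p22 p21 by metis
  moreover have "fc (psi x2 y2) = fc (psi x1 y2)" using gam_eq p22 p12 by metis
  ultimately have "fs (psi x2 y2) = fs (psi x1 y1)" using quad p11 p12 p21 p22 by metis
  then show ?thesis unfolding add_def using sig_eq p11 p22 by metis
qed

lemma add_self: "x \<in> G \<Longrightarrow> x \<oplus> x = z0"
  using Q[of x x z0 z0] add_o_left add_o_right oG by metis
lemma add_comm: "x \<in> G \<Longrightarrow> y \<in> G \<Longrightarrow> x \<oplus> y = y \<oplus> x"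
  using Q[of x y y x] add_self by metis
lemma add_cancel: "x \<in> G \<Longrightarrow> y \<in> G \<Longrightarrow> (x \<oplus> y) \<oplus> y = x"
  using Q[of x z0 "x \<oplus> y" y] add_o_right add_G oG by metis
lemma add_assoc: assumes "x \<in> G" "y \<in> G" "z \<in> G" shows "(x \<oplus> y) \<oplus> z = x \<oplus> (y \<oplus> z)"
proof -
  define w where "w = (x \<oplus> y) \<oplus> z"
  have wG: "w \<in> G" unfolding w_def using add_G assms by metis
  have "w \<oplus> z = x \<oplus> y" unfolding w_def using add_cancel add_G assms by metis
  then have "w \<oplus> y = x \<oplus> z" using Q[OF wG assms(2,1,3)] by metis
  then have "w \<oplus> y = z \<oplus> x" using add_comm assms by metis
  then have "w \<oplus> x = z \<oplus> y" using Q[OF wG assms(1,3,2)] by metis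
  then have "w \<oplus> x = y \<oplus> z" using add_comm assms by metis
  then have "w = (y \<oplus> z) \<oplus> x" using add_cancel wG assms by metis
  then show ?thesis unfolding w_def using add_comm add_G assms by metis
qed

end



context net3 begin

definition nadj where "nadj p q \<longleftrightarrow> p \<noteq> q \<and> (fr p = fr q \<or> fc p = fc q \<or> fs p = fs q)"

lemma nadj_coord: assumes "p \<in> P" "x \<in> G" "y \<in> G"
  shows "nadj p (psi x y) \<longleftrightarrow> \<not>(kap p = x \<and> gam p = y) \<and> (kap p = x \<or> gam p = y \<or> kap p \<oplus> gam p = x \<oplus> y)"
proof -
  note q = psi_prop[OF assms(2,3)]
  have "p = psi x y \<longleftrightarrow> (kap p = x \<and> gam p = y)" using pt_eq[OF assms(1)] q by metis
  moreover have "fr p = fr (psi x y) \<longleftrightarrow> kap p = x" using kap_eq[OF assms(1)] q by metis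
  moreover have "fc p = fc (psi x y) \<longleftrightarrow> gam p = y" using gam_eq[OF assms(1)] q by metis
  moreover have "fs p = fs (psi x y) \<longleftrightarrow> kap p \<oplus> gam p = x \<oplus> y"
    using sig_eq[OF assms(1)] q sig_kg[OF assms(1)] sig_kg[of "psi x y"] by metis
  ultimately show ?thesis unfolding nadj_def by blast
qed

lemma psi_inj: assumes "x\<in>G" "y\<in>G" "x'\<in>G" "y'\<in>G" shows "psi x y = psi x' y' \<longleftrightarrow> x = x' \<and> y = y'"
  using psi_prop assms by metis

lemma add_left_cancel: "x \<in> G \<Longrightarrow> y \<in> G \<Longrightarrow> x \<oplus> (x \<oplus> y) = y"
  using add_comm add_cancel add_G by metis
lemma add_solve: "x \<in> G \<Longrightarrow> y \<in> G \<Longrightarrow> x \<oplus> y = z \<Longrightarrow> y = x \<oplus> z"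
  using add_left_cancel by metis
lemma add_zero_iff: "x \<in> G \<Longrightarrow> y \<in> G \<Longrightarrow> x \<oplus> y = z0 \<longleftrightarrow> x = y"
  using add_cancel add_o_left add_self by metis

lemma fail4:
  assumes fin: "finite P" and ec: "n_ec P nadj 3"
    and e: "e1 \<in> G" "e2 \<in> G" "e1 \<noteq> z0" "e2 \<noteq> z0" "e1 \<noteq> e2"
    and sub: "G \<subseteq> {z0, e1, e2, e1 \<oplus> e2}"
  shows False
proof -
  note G0 = oG
  let ?B = "{psi z0 z0, psi z0 e1, psi z0 e2}"
  have BP: "?B \<subseteq> P" using psi_prop G0 e by auto
  have c: "card ?B = 3" using psi_inj G0 e by auto
  obtain z where z: "z \<in> P" "z \<notin> ?B" "\<forall>b\<in>?B. \<not> nadj z b"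
    using ec BP c unfolding n_ec_def by (metis Int_empty_left Un_empty_left empty_iff empty_subsetI finite.emptyI finite_insert)
  have k: "kap z \<in> G" and g: "gam z \<in> G" using kap_G gam_G z by auto
  have h1: "\<not> nadj z (psi z0 z0)" "\<not> nadj z (psi z0 e1)" "\<not> nadj z (psi z0 e2)" using z by auto
  have n1: "z \<noteq> psi z0 z0" "z \<noteq> psi z0 e1" "z \<noteq> psi z0 e2" using z by auto
  have nn: "\<not>(kap z = z0 \<and> gam z = y)" if "y \<in> G" "z \<noteq> psi z0 y" for y
    using that psi_kg[OF z(1)] by metis
  have c1: "kap z \<noteq> z0" "gam z \<noteq> z0" "gam z \<noteq> e1" "gam z \<noteq> e2"
    "kap z \<oplus> gam z \<noteq> z0" "kap z \<oplus> gam z \<noteq> e1" "kap z \<oplus> gam z \<noteq> e2"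
    using h1 nn[OF G0 n1(1)] nn[OF e(1) n1(2)] nn[OF e(2) n1(3)]
    unfolding nadj_coord[OF z(1) G0 G0] nadj_coord[OF z(1) G0 e(1)] nadj_coord[OF z(1) G0 e(2)]
    by (auto simp: add_o_left G0 e)
  have e12: "e1 \<oplus> e2 \<in> G" using add_G e by auto
  have gz: "gam z = e1 \<oplus> e2" using sub g c1 by auto
  have "kap z = e1 \<or> kap z = e2 \<or> kap z = e1 \<oplus> e2" using sub k c1 by auto
  moreover have "e1 \<oplus> (e1 \<oplus> e2) = e2" using add_left_cancel e by auto
  moreover have "e2 \<oplus> (e1 \<oplus> e2) = e1" using add_comm add_cancel e e12 by metis
  moreover have "(e1 \<oplus> e2) \<oplus> (e1 \<oplus> e2) = z0" using add_self e12 by auto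
  ultimately show False using c1 gz by auto
qed

lemma fail16:
  assumes fin: "finite P" and ec: "n_ec P nadj 3"
    and e: "e1 \<in> G" "e2 \<in> G" "e3 \<in> G" "e4 \<in> G"
    and N1: "e1 \<noteq> z0" "e3 \<noteq> z0" "e1 \<noteq> e3"
    and N2: "e2 \<noteq> z0" "e4 \<noteq> z0" "e2 \<noteq> e4"
    and N3: "e1 \<oplus> e2 \<noteq> z0" "e3 \<oplus> e4 \<noteq> z0" "e1 \<oplus> e2 \<noteq> e3 \<oplus> e4"
    and N4: "e2 \<noteq> e3 \<oplus> e4" "e4 \<noteq> e1 \<oplus> e2" "e1 \<noteq> e3 \<oplus> e4" "e1 \<oplus> e4 \<noteq> z0" "e3 \<noteq> e1 \<oplus> e2" "e3 \<oplus> e2 \<noteq> z0"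
  shows False
proof -
  note G0 = oG
  let ?A = "{psi z0 z0, psi e1 e2, psi e3 e4}"
  have AP: "?A \<subseteq> P" using psi_prop G0 e by auto
  have c: "card ?A = 3" using psi_inj G0 e N1 by auto
  obtain z where z: "z \<in> P" "z \<notin> ?A" "\<forall>a\<in>?A. nadj z a"
    using ec AP c unfolding n_ec_def
    by (metis Int_empty_right Un_empty_right empty_iff empty_subsetI finite.emptyI finite_insert)
  have k: "kap z \<in> G" and g: "gam z \<in> G" using kap_G gam_G z by auto
  have s: "kap z \<oplus> gam z \<in> G" using add_G k g by auto
  have h: "nadj z (psi z0 z0)" "nadj z (psi e1 e2)" "nadj z (psi e3 e4)" using z by auto
  have r1: "\<not>(kap z = z0 \<and> gam z = z0) \<and> (kap z = z0 \<or> gam z = z0 \<or> kap z \<oplus> gam z = z0)"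
    using h(1) nadj_coord[OF z(1) G0 G0] add_o_left G0 by simp
  have r2: "\<not>(kap z = e1 \<and> gam z = e2) \<and> (kap z = e1 \<or> gam z = e2 \<or> kap z \<oplus> gam z = e1 \<oplus> e2)"
    using h(2) nadj_coord[OF z(1) e(1,2)] by simp
  have r3: "\<not>(kap z = e3 \<and> gam z = e4) \<and> (kap z = e3 \<or> gam z = e4 \<or> kap z \<oplus> gam z = e3 \<oplus> e4)"
    using h(3) nadj_coord[OF z(1) e(3,4)] by simp
  have sa: "gam z = kap z \<oplus> (kap z \<oplus> gam z)" and sb: "kap z = (kap z \<oplus> gam z) \<oplus> gam z"
    using add_left_cancel add_cancel k g by auto
  have comm: "e3 \<oplus> e2 = e2 \<oplus> e3" "e1 \<oplus> e4 = e4 \<oplus> e1" using add_comm e by auto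
  have lc: "\<And>x y. x \<in> G \<Longrightarrow> y \<in> G \<Longrightarrow> x \<oplus> (x \<oplus> y) = y" using add_left_cancel by auto
  have rc': "\<And>x y. x \<in> G \<Longrightarrow> y \<in> G \<Longrightarrow> (x \<oplus> y) \<oplus> y = x" using add_cancel by auto
  have ee: "e1 \<oplus> e2 \<in> G" "e3 \<oplus> e4 \<in> G" using add_G e by auto
  show False
    using r1 r2 r3 sa sb N1 N2 N3 N4 e ee G0 
    by (auto simp: add_o_left add_o_right lc rc' add_self comm)
qed

end



context net3 begin

definition sel :: "bool \<Rightarrow> 'p \<Rightarrow> 'p" where "sel b e = (if b then e else z0)"
definition th :: "'p \<Rightarrow> 'p \<Rightarrow> 'p \<Rightarrow> z2cube \<Rightarrow> 'p" where
  "th e1 e2 e3 u = (case u of (b1, b2, b3) \<Rightarrow> (sel b1 e1 \<oplus> sel b2 e2) \<oplus> sel b3 e3)"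

lemma sel_G: "e \<in> G \<Longrightarrow> sel b e \<in> G" unfolding sel_def using oG by auto
lemma sel_add: "e \<in> G \<Longrightarrow> sel p e \<oplus> sel q e = sel (p \<noteq> q) e"
  unfolding sel_def using add_self add_o_left add_o_right oG by auto
lemma medial: "a\<in>G \<Longrightarrow> b\<in>G \<Longrightarrow> c\<in>G \<Longrightarrow> d\<in>G \<Longrightarrow> (a \<oplus> b) \<oplus> (c \<oplus> d) = (a \<oplus> c) \<oplus> (b \<oplus> d)"
  using add_assoc add_comm add_G by metis

lemma th_G: "e1\<in>G \<Longrightarrow> e2\<in>G \<Longrightarrow> e3\<in>G \<Longrightarrow> th e1 e2 e3 u \<in> G"
  unfolding th_def using sel_G add_G by (auto split: prod.splits)

lemma th_hom: assumes e: "e1\<in>G" "e2\<in>G" "e3\<in>G"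
  shows "th e1 e2 e3 (z2add u v) = th e1 e2 e3 u \<oplus> th e1 e2 e3 v"
proof -
  obtain u1 u2 u3 where u: "u = (u1,u2,u3)" by (cases u) auto
  obtain v1 v2 v3 where v: "v = (v1,v2,v3)" by (cases v) auto
  have "th e1 e2 e3 u \<oplus> th e1 e2 e3 v =
     ((sel u1 e1 \<oplus> sel u2 e2) \<oplus> sel u3 e3) \<oplus> ((sel v1 e1 \<oplus> sel v2 e2) \<oplus> sel v3 e3)"
    unfolding th_def u v by simp
  also have "\<dots> = ((sel u1 e1 \<oplus> sel u2 e2) \<oplus> (sel v1 e1 \<oplus> sel v2 e2)) \<oplus> (sel u3 e3 \<oplus> sel v3 e3)"
    using medial sel_G add_G e by metis
  also have "\<dots> = ((sel u1 e1 \<oplus> sel v1 e1) \<oplus> (sel u2 e2 \<oplus> sel v2 e2)) \<oplus> (sel u3 e3 \<oplus> sel v3 e3)"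
    using medial sel_G add_G e by metis
  also have "\<dots> = th e1 e2 e3 (z2add u v)"
    unfolding th_def u v z2add_def using sel_add e by simp
  finally show ?thesis by simp
qed

lemma th_inj:
  assumes e: "e1\<in>G" "e2\<in>G" "e3\<in>G"
    and n: "e1 \<noteq> z0" "e2 \<noteq> z0" "e1 \<noteq> e2" "e3 \<noteq> z0" "e3 \<noteq> e1" "e3 \<noteq> e2" "e3 \<noteq> e1 \<oplus> e2"
  shows "inj (th e1 e2 e3)"
proof (rule injI)
  fix u v assume h: "th e1 e2 e3 u = th e1 e2 e3 v"
  have e12: "e1 \<oplus> e2 \<in> G" using add_G e by auto
  have z: "th e1 e2 e3 (z2add u v) = z0" using th_hom[OF e] h add_self th_G[OF e] by metis
  obtain w1 w2 w3 where w: "z2add u v = (w1,w2,w3)" by (cases "z2add u v") auto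
  have nz: "e1 \<oplus> e2 \<noteq> z0" "e1 \<oplus> e3 \<noteq> z0" "e2 \<oplus> e3 \<noteq> z0" "(e1 \<oplus> e2) \<oplus> e3 \<noteq> z0"
    using add_zero_iff e e12 n by metis+
  have "\<not> w1 \<and> \<not> w2 \<and> \<not> w3" using z nz n e oG e12 unfolding w th_def sel_def
    by (cases w1; cases w2; cases w3) (auto simp: add_o_left add_o_right)
  then show "u = v" using w unfolding z2add_def
    by (cases u; cases v) auto
qed

lemma card_z2: "card (UNIV :: z2cube set) = 8"
  by (simp add: card_UNIV_bool UNIV_Times_UNIV[symmetric] card_cartesian_product del: UNIV_Times_UNIV)

lemma net_main:
  assumes fin: "finite P" and ec: "n_ec P nadj 3" and c3: "card G \<ge> 3"
  shows "card G = 8 \<and> graph_iso P nadj (UNIV :: (z2cube \<times> z2cube) set) ls_adj"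
proof -
  have finG: "finite G" using fin unfolding G_def by simp
  obtain e1 where e1: "e1 \<in> G" "e1 \<noteq> z0"
  proof -
    have "\<not> G \<subseteq> {z0}" using c3 card_mono[of "{z0}" G] by auto
    then show ?thesis using that by auto
  qed
  obtain e2 where e2: "e2 \<in> G" "e2 \<noteq> z0" "e2 \<noteq> e1"
  proof -
    have "card {z0, e1} \<le> 2" by (simp add: card_insert_le_m1)
    then have "\<not> G \<subseteq> {z0, e1}" using c3 card_mono[of "{z0,e1}" G] by auto
    then show ?thesis using that by auto
  qed
  have e12: "e1 \<oplus> e2 \<in> G" using add_G e1 e2 by auto
  obtain e3 where e3: "e3 \<in> G" "e3 \<notin> {z0, e1, e2, e1 \<oplus> e2}"
  proof -
    have "\<not> G \<subseteq> {z0, e1, e2, e1 \<oplus> e2}" using fail4[OF fin ec e1(1) e2(1) e1(2) e2(2)] e2(3) by metis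
    then show ?thesis using that by auto
  qed
  define S3 where "S3 = {z0, e1, e2, e1 \<oplus> e2, e3, e1 \<oplus> e3, e2 \<oplus> e3, (e1 \<oplus> e2) \<oplus> e3}"
  have GS: "G \<subseteq> S3"
  proof (rule ccontr)
    assume "\<not> G \<subseteq> S3"
    then obtain e4 where e4: "e4 \<in> G" "e4 \<notin> S3" by auto
    have m: "e1 \<oplus> e3 \<in> G" "e2 \<oplus> e3 \<in> G" "e3 \<oplus> e4 \<in> G" using add_G e1 e2 e3 e4 by auto
    show False
    proof (rule fail16[OF fin ec e1(1) e2(1) e3(1) e4(1)])
      show "e1 \<noteq> z0" "e3 \<noteq> z0" "e1 \<noteq> e3" "e2 \<noteq> z0" "e4 \<noteq> z0" "e2 \<noteq> e4"
        using e1 e2 e3 e4 unfolding S3_def by auto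
      show "e1 \<oplus> e2 \<noteq> z0" using add_zero_iff e1 e2 by metis
      show "e3 \<oplus> e4 \<noteq> z0" using add_zero_iff e3 e4 unfolding S3_def by auto
      show "e1 \<oplus> e2 \<noteq> e3 \<oplus> e4"
        using add_solve[OF e3(1) e4(1)] add_comm[OF e12 e3(1)] e4 unfolding S3_def by auto
      show "e2 \<noteq> e3 \<oplus> e4"
        using add_solve[OF e3(1) e4(1)] add_comm[OF e2(1) e3(1)] e4 unfolding S3_def by auto
      show "e4 \<noteq> e1 \<oplus> e2" using e4 unfolding S3_def by auto
      show "e1 \<noteq> e3 \<oplus> e4"
        using add_solve[OF e3(1) e4(1)] add_comm[OF e1(1) e3(1)] e4 unfolding S3_def by auto
      show "e1 \<oplus> e4 \<noteq> z0" using add_zero_iff e1 e4 unfolding S3_def by auto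
      show "e3 \<noteq> e1 \<oplus> e2" using e3 by auto
      show "e3 \<oplus> e2 \<noteq> z0" using add_zero_iff e3 e2 by auto
    qed
  qed
  let ?t = "th e1 e2 e3"
  have eG: "e1 \<in> G" "e2 \<in> G" "e3 \<in> G" using e1 e2 e3 by auto
  have inj: "inj ?t" using th_inj[OF eG] e1 e2 e3 by auto
  have img: "?t ` UNIV = G"
  proof
    show "?t ` UNIV \<subseteq> G" using th_G[OF eG] by auto
    have "S3 \<subseteq> ?t ` UNIV"
    proof -
      have "?t (False,False,False) = z0" "?t (True,False,False) = e1" "?t (False,True,False) = e2"
        "?t (True,True,False) = e1 \<oplus> e2" "?t (False,False,True) = e3" "?t (True,False,True) = e1 \<oplus> e3"
        "?t (False,True,True) = e2 \<oplus> e3" "?t (True,True,True) = (e1 \<oplus> e2) \<oplus> e3"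
        unfolding th_def sel_def using eG oG e12 by (auto simp: add_o_left add_o_right)
      then show ?thesis unfolding S3_def by (metis empty_subsetI insert_subset rangeI)
    qed
    then show "G \<subseteq> ?t ` UNIV" using GS by auto
  qed
  have cG: "card G = 8" using card_image[OF inj] img card_z2 by simp
  define f where "f p = (inv ?t (kap p), inv ?t (gam p))" for p
  have tinv: "?t (inv ?t x) = x" if "x \<in> G" for x using img that by (metis f_inv_into_f)
  have invt: "inv ?t (?t u) = u" for u using inj by simp
  have bij: "bij_betw f P UNIV"
  proof (rule bij_betwI')
    fix p q assume pq: "p \<in> P" "q \<in> P"
    show "f p = f q \<longleftrightarrow> p = q"
    proof
      assume "f p = f q"
      then have "inv ?t (kap p) = inv ?t (kap q)" "inv ?t (gam p) = inv ?t (gam q)" unfolding f_def by auto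
      then have "kap p = kap q" "gam p = gam q" using tinv kap_G gam_G pq by metis+
      then show "p = q" using pt_eq pq by auto
    qed simp
  next
    fix p assume "p \<in> P" then show "f p \<in> UNIV" by simp
  next
    fix y :: "z2cube \<times> z2cube"
    obtain u v where y: "y = (u, v)" by (cases y)
    have "psi (?t u) (?t v) \<in> P" "f (psi (?t u) (?t v)) = y"
      using psi_prop th_G[OF eG] invt unfolding f_def y by auto
    then show "\<exists>x\<in>P. y = f x" by metis
  qed
  have adj: "nadj p q \<longleftrightarrow> ls_adj (f p) (f q)" if pq: "p \<in> P" "q \<in> P" for p q
  proof -
    let ?a = "inv ?t (kap p)" and ?b = "inv ?t (gam p)" and ?a' = "inv ?t (kap q)" and ?b' = "inv ?t (gam q)"
    have ta: "?t ?a = kap p" "?t ?b = gam p" "?t ?a' = kap q" "?t ?b' = gam q"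
      using tinv kap_G gam_G pq by auto
    have e1': "?a = ?a' \<longleftrightarrow> fr p = fr q" using ta kap_eq[OF pq] by metis
    have e2': "?b = ?b' \<longleftrightarrow> fc p = fc q" using ta gam_eq[OF pq] by metis
    have "z2add ?a ?b = z2add ?a' ?b' \<longleftrightarrow> ?t (z2add ?a ?b) = ?t (z2add ?a' ?b')" by (simp add: inj_eq[OF inj])
    also have "\<dots> \<longleftrightarrow> kap p \<oplus> gam p = kap q \<oplus> gam q" using th_hom[OF eG] ta by simp
    also have "\<dots> \<longleftrightarrow> fs p = fs q" using sig_kg sig_eq pq by metis
    finally have e3': "z2add ?a ?b = z2add ?a' ?b' \<longleftrightarrow> fs p = fs q" .
    have e0: "(?a, ?b) = (?a', ?b') \<longleftrightarrow> p = q" using bij pq unfolding f_def bij_betw_def inj_on_def by auto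
    show ?thesis unfolding nadj_def ls_adj_def f_def using e0 e1' e2' e3' by auto
  qed
  show ?thesis using cG bij adj unfolding graph_iso_def by blast
qed

end



lemma n_ec_imp: assumes h: "\<And>x y. x \<in> V \<Longrightarrow> y \<in> V \<Longrightarrow> E x y \<Longrightarrow> E' x y"
  and h2: "\<And>x y. x \<in> V \<Longrightarrow> y \<in> V \<Longrightarrow> E' x y \<Longrightarrow> E x y"
  and e: "n_ec V E n" shows "n_ec V E' n"
  unfolding n_ec_def
proof (intro allI impI)
  fix A B assume b: "A \<subseteq> V \<and> B \<subseteq> V \<and> A \<inter> B = {} \<and> finite (A \<union> B) \<and> card (A \<union> B) = n"
  obtain z where z: "z\<in>V" "z \<notin> A \<union> B" "\<forall>a\<in>A. E z a" "\<forall>b\<in>B. \<not> E z b"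
    using e[unfolded n_ec_def, rule_format, OF b] by blast
  have A: "A \<subseteq> V" and B: "B \<subseteq> V" using b by auto
  have "\<forall>a\<in>A. E' z a" using z(1,3) A h by blast
  moreover have "\<forall>a\<in>B. \<not> E' z a" using z(1,4) B h2 by blast
  ultimately show "\<exists>z\<in>V. z \<notin> A \<union> B \<and> (\<forall>a\<in>A. E' z a) \<and> (\<forall>b\<in>B. \<not> E' z b)" using z by blast
qed
lemma n_ec_cong: assumes h: "\<And>x y. x \<in> V \<Longrightarrow> y \<in> V \<Longrightarrow> E x y = E' x y" shows "n_ec V E n = n_ec V E' n"
  using n_ec_imp[of V E E' n] n_ec_imp[of V E' E n] h by blast

lemma graph_iso_cong: "(\<And>x y. x \<in> V \<Longrightarrow> y \<in> V \<Longrightarrow> E x y = E' x y) \<Longrightarrow> graph_iso V E W F = graph_iso V E' W F"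
  unfolding graph_iso_def by auto

context pg22 begin

lemma pg_main:
  assumes ec: "n_ec P (point_adj L) 3" and s2: "s \<ge> 2"
  shows "s = 7 \<and> graph_iso P (point_adj L) (UNIV :: (z2cube \<times> z2cube) set) ls_adj"
proof -
  obtain o0 where oP: "o0 \<in> P" using Pne by auto
  obtain R0 C0 S0 where lo: "{M\<in>L. o0 \<in> M} = {R0, C0, S0}" and d: "R0 \<noteq> C0" "C0 \<noteq> S0" "R0 \<noteq> S0"
    using cardlines[OF oP] by (auto simp: card_3_iff)
  have RL: "R0 \<in> L" "o0 \<in> R0" and CL: "C0 \<in> L" "o0 \<in> C0" and SL: "S0 \<in> L" "o0 \<in> S0"
    using lo by blast+
  define fr where "fr p = par p R0" for p
  define fc where "fc p = par p C0" for p
  define fs where "fs p = par p S0" for p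
  have u_rc: "\<And>p q. p\<in>P \<Longrightarrow> q\<in>P \<Longrightarrow> fr p = fr q \<Longrightarrow> fc p = fc q \<Longrightarrow> p = q"
    unfolding fr_def fc_def using par_uniq2[OF RL(1) CL(1) d(1) RL(2) CL(2)] by blast
  have u_rs: "\<And>p q. p\<in>P \<Longrightarrow> q\<in>P \<Longrightarrow> fr p = fr q \<Longrightarrow> fs p = fs q \<Longrightarrow> p = q"
    unfolding fr_def fs_def using par_uniq2[OF RL(1) SL(1) d(3) RL(2) SL(2)] by blast
  have u_cs: "\<And>p q. p\<in>P \<Longrightarrow> q\<in>P \<Longrightarrow> fc p = fc q \<Longrightarrow> fs p = fs q \<Longrightarrow> p = q"
    unfolding fc_def fs_def using par_uniq2[OF CL(1) SL(1) d(2) CL(2) SL(2)] by blast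
  have e_rc: "\<And>p q. p\<in>P \<Longrightarrow> q\<in>P \<Longrightarrow> \<exists>x\<in>P. fr x = fr p \<and> fc x = fc q"
    unfolding fr_def fc_def using par_meet[OF RL(1) CL(1) d(1) RL(2) CL(2)] by blast
  have e_rs: "\<And>p q. p\<in>P \<Longrightarrow> q\<in>P \<Longrightarrow> \<exists>x\<in>P. fr x = fr p \<and> fs x = fs q"
    unfolding fr_def fs_def using par_meet[OF RL(1) SL(1) d(3) RL(2) SL(2)] by blast
  have e_sc: "\<And>p q. p\<in>P \<Longrightarrow> q\<in>P \<Longrightarrow> \<exists>x\<in>P. fs x = fs p \<and> fc x = fc q"
    unfolding fs_def fc_def using par_meet[OF SL(1) CL(1) d(2)[symmetric] SL(2) CL(2)] by blast
  have lines_p: "{M\<in>L. p \<in> M} = {fr p, fc p, fs p}" if p: "p \<in> P" for p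
  proof -
    have sub: "{fr p, fc p, fs p} \<subseteq> {M\<in>L. p \<in> M}"
      unfolding fr_def fc_def fs_def using par_in par_L p RL SL CL by auto
    have "card {fr p, fc p, fs p} = 3"
      unfolding fr_def fc_def fs_def
      using par_neq[OF RL(1) CL(1) d(1) RL(2) CL(2) p] par_neq[OF CL(1) SL(1) d(2) CL(2) SL(2) p]
        par_neq[OF RL(1) SL(1) d(3) RL(2) SL(2) p] by simp
    then show ?thesis using card_subset_eq[OF _ sub] finL cardlines[OF p] by (metis (no_types, lifting) finite_subset mem_Collect_eq subsetI)
  qed
  have same: "q \<in> par p K \<Longrightarrow> p \<in> P \<Longrightarrow> K \<in> L \<Longrightarrow> par q K = par p K" for p q K using par_same by blast
  have adj: "point_adj L p q \<longleftrightarrow> p \<noteq> q \<and> (fr p = fr q \<or> fc p = fc q \<or> fs p = fs q)" if pq: "p\<in>P" "q\<in>P" for p q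
  proof
    assume h: "point_adj L p q"
    then obtain M where M: "M \<in> L" "p \<in> M" "q \<in> M" "p \<noteq> q" unfolding point_adj_def by auto
    then have "M \<in> {fr p, fc p, fs p}" using lines_p[OF pq(1)] by blast
    then show "p \<noteq> q \<and> (fr p = fr q \<or> fc p = fc q \<or> fs p = fs q)"
      using M same[of q p] pq RL SL CL unfolding fr_def fc_def fs_def by auto
  next
    assume h: "p \<noteq> q \<and> (fr p = fr q \<or> fc p = fc q \<or> fs p = fs q)"
    have "fr p \<in> L" "fc p \<in> L" "fs p \<in> L" "p \<in> fr p" "p \<in> fc p" "p \<in> fs p"
      "q \<in> fr q" "q \<in> fc q" "q \<in> fs q"
      unfolding fr_def fc_def fs_def using par_in par_L pq RL SL CL by auto
    then show "point_adj L p q" using h unfolding point_adj_def by metis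
  qed
  have quad: "\<And>x y w z. x\<in>P \<Longrightarrow> y\<in>P \<Longrightarrow> w\<in>P \<Longrightarrow> z\<in>P \<Longrightarrow> fr x = fr y \<Longrightarrow> fc x = fc w
     \<Longrightarrow> fs y = fs w \<Longrightarrow> fr z = fr w \<Longrightarrow> fc z = fc y \<Longrightarrow> fs z = fs x"
  proof -
    fix x y w z assume P: "x\<in>P" "y\<in>P" "w\<in>P" "z\<in>P" and h: "fr x = fr y" "fc x = fc w" "fs y = fs w"
      "fr z = fr w" "fc z = fc y"
    show "fs z = fs x"
    proof (cases "x \<noteq> y \<and> x \<noteq> w \<and> y \<noteq> w")
      case False
      then have "x = y \<and> x = w" using u_rc u_rs u_cs P h by metis
      then have "z = x" using u_rc P h by metis
      then show ?thesis by simp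
    next
      case True
      let ?A = "{x, y, w}"
      have c: "card ?A = 3" using True by auto
      have pre: "?A \<subseteq> P \<and> {} \<subseteq> P \<and> ?A \<inter> {} = {} \<and> finite (?A \<union> {}) \<and> card (?A \<union> {}) = 3"
        using c P by auto
      obtain z' where z': "z' \<in> P" "z' \<notin> ?A" "\<forall>a\<in>?A. point_adj L z' a"
        using ec[unfolded n_ec_def, rule_format, OF pre] by blast
      have a: "fr z' = fr x \<or> fc z' = fc x \<or> fs z' = fs x" "fr z' = fr y \<or> fc z' = fc y \<or> fs z' = fs y"
        "fr z' = fr w \<or> fc z' = fc w \<or> fs z' = fs w"
        using z' adj P by auto
      have nz: "z' \<noteq> x" "z' \<noteq> y" "z' \<noteq> w" using z' by auto
      have n1: "fr z' \<noteq> fr x"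
      proof
        assume r: "fr z' = fr x"
        show False using a(3)
        proof (elim disjE)
          assume "fr z' = fr w" then show False using u_rc[OF P(1) P(3)] r h True by metis
        next
          assume "fc z' = fc w" then show False using u_rc[OF z'(1) P(1)] r h nz by metis
        next
          assume "fs z' = fs w" then show False using u_rs[OF z'(1) P(2)] r h nz by metis
        qed
      qed
      have n2: "fc z' \<noteq> fc x"
      proof
        assume r: "fc z' = fc x"
        show False using a(2)
        proof (elim disjE)
          assume "fr z' = fr y" then show False using u_rc[OF z'(1) P(1)] r h nz by metis
        next
          assume "fc z' = fc y" then show False using u_rc[OF P(1) P(2)] r h True by metis
        next
          assume "fs z' = fs y" then show False using u_cs[OF z'(1) P(3)] r h nz by metis
        qed
      qed
      have s1: "fs z' = fs x" using a(1) n1 n2 by blast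
      have nxy: "fs x \<noteq> fs y" using u_rs[OF P(1) P(2)] h True by metis
      have s2: "fc z' = fc y" using a(2) n1 h s1 nxy by metis
      have s3: "fr z' = fr w" using a(3) n2 h s1 nxy by metis
      have "fs z' = fs x \<and> fc z' = fc y \<and> fr z' = fr w" using s1 s2 s3 by simp
      then have "z' = z" using u_rc[OF z'(1) P(4)] h by metis
      then show ?thesis using \<open>fs z' = fs x \<and> _\<close> by simp
    qed
  qed
  interpret N: net3 P fr fc fs o0
    by (rule net3.intro[OF oP u_rc u_rs u_cs e_rc e_rs e_sc quad])
  have eq: "point_adj L p q = N.nadj p q" if "p \<in> P" "q \<in> P" for p q
    using adj[OF that] unfolding N.nadj_def by simp
  have ec': "n_ec P N.nadj 3" using ec n_ec_cong[of P "point_adj L" N.nadj 3] eq by simp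
  have GR: "N.G = R0"
  proof -
    have "fr o0 = R0" unfolding fr_def using par_eq[OF oP RL(1) RL(1) RL(2)] by simp
    moreover have "x \<in> P \<Longrightarrow> par x R0 = R0 \<longleftrightarrow> x \<in> R0" for x
      using par_eq[OF _ RL(1) RL(1)] par_in[OF _ RL(1)] by metis
    ultimately show ?thesis unfolding N.G_def fr_def using Lsub[OF RL(1)] by auto
  qed
  have cG: "card N.G = s + 1" using GR cardM RL by simp
  have m: "card N.G = 8 \<and> graph_iso P N.nadj (UNIV :: (z2cube \<times> z2cube) set) ls_adj"
    using N.net_main[OF finP ec'] cG s2 by simp
  then show ?thesis using cG graph_iso_cong[of P "point_adj L" N.nadj] eq by auto
qed

end



definition zz :: z2cube where "zz = (False, False, False)"

lemma z2add_comm: "z2add a b = z2add b a"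
  unfolding z2add_def by (cases a; cases b) auto
lemma z2add_assoc: "z2add (z2add a b) c = z2add a (z2add b c)"
  unfolding z2add_def by (cases a; cases b; cases c) auto
lemma z2add_lcomm: "z2add a (z2add b c) = z2add b (z2add a c)"
  unfolding z2add_def by (cases a; cases b; cases c) auto
lemma z2add_zz[simp]: "z2add a zz = a" "z2add zz a = a"
  unfolding z2add_def zz_def by (cases a; auto)+
lemma z2add_self[simp]: "z2add a a = zz"
  unfolding z2add_def zz_def by (cases a) auto
lemma z2add_cancel[simp]: "z2add a (z2add a b) = b" "z2add (z2add b a) a = b"
  unfolding z2add_def by (cases a; cases b; auto)+
lemma z2add_eq_zz: "z2add a b = zz \<longleftrightarrow> a = b"
  unfolding z2add_def zz_def by (cases a; cases b) auto
lemma z2add_inj1[simp]: "z2add a b = z2add a c \<longleftrightarrow> b = c"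
  unfolding z2add_def by (cases a; cases b; cases c) auto
lemma z2add_inj2[simp]: "z2add b a = z2add c a \<longleftrightarrow> b = c"
  unfolding z2add_def by (cases a; cases b; cases c) auto
lemma z2add_solve: "z2add a b = c \<longleftrightarrow> b = z2add a c"
  by (metis z2add_cancel(1))

lemma ls_adj_simp: "ls_adj (a, b) (a', b') \<longleftrightarrow> (a, b) \<noteq> (a', b') \<and> (a = a' \<or> b = b' \<or> z2add a b = z2add a' b')"
  unfolding ls_adj_def by simp

section \<open>The concrete geometry\<close>

definition rowL :: "z2cube \<Rightarrow> (z2cube \<times> z2cube) set" where "rowL a = {p. fst p = a}"
definition colL :: "z2cube \<Rightarrow> (z2cube \<times> z2cube) set" where "colL b = {p. snd p = b}"
definition symL :: "z2cube \<Rightarrow> (z2cube \<times> z2cube) set" where "symL c = {p. z2add (fst p) (snd p) = c}"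
definition L0 where "L0 = range rowL \<union> range colL \<union> range symL"

lemma card_z2': "card (UNIV :: z2cube set) = 8"
  by (simp add: card_UNIV_bool UNIV_Times_UNIV[symmetric] card_cartesian_product del: UNIV_Times_UNIV)

lemma card_row: "card (rowL a) = 8"
proof -
  have "rowL a = Pair a ` UNIV" unfolding rowL_def by force
  moreover have "card (Pair a ` (UNIV :: z2cube set)) = card (UNIV :: z2cube set)" by (rule card_image) (simp add: inj_on_def)
  ultimately show ?thesis using card_z2' by simp
qed
lemma card_col: "card (colL b) = 8"
proof -
  have "colL b = (\<lambda>x. (x, b)) ` UNIV" unfolding colL_def by force
  moreover have "card ((\<lambda>x. (x, b)) ` (UNIV :: z2cube set)) = card (UNIV :: z2cube set)" by (rule card_image) (simp add: inj_on_def)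
  ultimately show ?thesis using card_z2' by simp
qed
lemma card_sym: "card (symL c) = 8"
proof -
  have "symL c = (\<lambda>x. (x, z2add x c)) ` UNIV" unfolding symL_def
    by (auto simp: z2add_solve image_iff)
  moreover have "card ((\<lambda>x. (x, z2add x c)) ` (UNIV :: z2cube set)) = card (UNIV :: z2cube set)" by (rule card_image) (simp add: inj_on_def)
  ultimately show ?thesis using card_z2' by simp
qed

lemma int_rc: "rowL a \<inter> colL b = {(a, b)}" unfolding rowL_def colL_def by auto
lemma int_rs: "rowL a \<inter> symL c = {(a, z2add a c)}" unfolding rowL_def symL_def by (auto simp: z2add_solve)
lemma int_cs: "colL b \<inter> symL c = {(z2add b c, b)}" unfolding colL_def symL_def
  by (auto simp: z2add_solve z2add_comm)
lemma int_rr: "a \<noteq> a' \<Longrightarrow> rowL a \<inter> rowL a' = {}" unfolding rowL_def by auto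
lemma int_cc: "a \<noteq> a' \<Longrightarrow> colL a \<inter> colL a' = {}" unfolding colL_def by auto
lemma int_ss: "a \<noteq> a' \<Longrightarrow> symL a \<inter> symL a' = {}" unfolding symL_def by auto

lemma card1_ne8: "X = {x} \<Longrightarrow> card X \<noteq> 8" by simp

lemma ne_rc: "rowL a \<noteq> colL b" using int_rc[of a b] card_row[of a] by (metis Int_absorb card1_ne8)
lemma ne_rs: "rowL a \<noteq> symL c" using int_rs[of a c] card_row[of a] by (metis Int_absorb card1_ne8)
lemma ne_cs: "colL b \<noteq> symL c" using int_cs[of b c] card_col[of b] by (metis Int_absorb card1_ne8)
lemma row_eq: "rowL a = rowL a' \<longleftrightarrow> a = a'" using int_rr card_row by (metis Int_absorb card.empty zero_neq_numeral)
lemma col_eq: "colL a = colL a' \<longleftrightarrow> a = a'" using int_cc card_col by (metis Int_absorb card.empty zero_neq_numeral)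
lemma sym_eq: "symL a = symL a' \<longleftrightarrow> a = a'" using int_ss card_sym by (metis Int_absorb card.empty zero_neq_numeral)

lemma mem_row: "p \<in> rowL a \<longleftrightarrow> fst p = a" and mem_col: "p \<in> colL b \<longleftrightarrow> snd p = b"
  and mem_sym: "p \<in> symL c \<longleftrightarrow> z2add (fst p) (snd p) = c"
  unfolding rowL_def colL_def symL_def by auto

lemma lines_through: "{M\<in>L0. p \<in> M} = {rowL (fst p), colL (snd p), symL (z2add (fst p) (snd p))}"
  unfolding L0_def by (auto simp: mem_row mem_col mem_sym)

lemma L0_cases: "M \<in> L0 \<Longrightarrow> (\<And>a. M = rowL a \<Longrightarrow> R) \<Longrightarrow> (\<And>a. M = colL a \<Longrightarrow> R) \<Longrightarrow> (\<And>a. M = symL a \<Longrightarrow> R) \<Longrightarrow> R"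
  unfolding L0_def by auto

lemma pg0: "partial_geometry (UNIV :: (z2cube \<times> z2cube) set) L0 7 2 2"
  unfolding partial_geometry_def
proof (intro conjI ballI impI)
  show "finite (UNIV :: (z2cube \<times> z2cube) set)" by simp
  show "finite L0" unfolding L0_def by simp
  show "(UNIV :: (z2cube \<times> z2cube) set) \<noteq> {}" by simp
  fix M assume "M \<in> L0" then show "M \<subseteq> UNIV" by simp
next
  fix M assume "M \<in> L0" then show "card M = 7 + 1"
    by (rule L0_cases) (auto simp: card_row card_col card_sym)
next
  fix p :: "z2cube \<times> z2cube"
  show "card {M\<in>L0. p \<in> M} = 2 + 1" unfolding lines_through
    using ne_rc ne_rs ne_cs by simp
next
  fix p q :: "z2cube \<times> z2cube" assume pq: "p \<noteq> q"
  have "\<forall>M\<in>{M\<in>L0. p \<in> M \<and> q \<in> M}. \<forall>N\<in>{M\<in>L0. p \<in> M \<and> q \<in> M}. M = N"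
  proof (intro ballI)
    fix M N assume M: "M \<in> {M\<in>L0. p \<in> M \<and> q \<in> M}" and N: "N \<in> {M\<in>L0. p \<in> M \<and> q \<in> M}"
    have "M \<in> {M\<in>L0. p \<in> M}" "N \<in> {M\<in>L0. p \<in> M}" using M N by auto
    then have MN: "M \<in> {rowL (fst p), colL (snd p), symL (z2add (fst p) (snd p))}"
      "N \<in> {rowL (fst p), colL (snd p), symL (z2add (fst p) (snd p))}" unfolding lines_through by auto
    have "{p, q} \<subseteq> M \<inter> N" using M N by auto
    moreover have "card {p, q} = 2" using pq by simp
    ultimately have "\<not> card (M \<inter> N) \<le> 1"
      using card_mono[of "M \<inter> N" "{p,q}"] by (metis finite Suc_1 not_less_eq_eq)
    let ?r = "rowL (fst p)" and ?c = "colL (snd p)" and ?s = "symL (z2add (fst p) (snd p))"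
    have c1: "card (?r \<inter> ?c) = 1" "card (?r \<inter> ?s) = 1" "card (?c \<inter> ?s) = 1"
      "card (?c \<inter> ?r) = 1" "card (?s \<inter> ?r) = 1" "card (?s \<inter> ?c) = 1"
      by (simp_all add: int_rc int_rs int_cs Int_commute[of _ ?r] Int_commute[of ?s ?c])
    show "M = N"
    proof (rule ccontr)
      assume "M \<noteq> N"
      then have "card (M \<inter> N) = 1" using MN c1 by auto
      then show False using \<open>\<not> card (M \<inter> N) \<le> 1\<close> by simp
    qed
  qed
  then show "card {M\<in>L0. p \<in> M \<and> q \<in> M} \<le> 1"
    by (simp add: card_le_Suc0_iff_eq[OF finite_subset[OF _ finite[of L0]]])
next
  fix p :: "z2cube \<times> z2cube" and K assume K: "K \<in> L0" and pK: "p \<notin> K"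
  obtain a b where p: "p = (a, b)" by (cases p)
  have e: "{M\<in>L0. p \<in> M \<and> M \<inter> K \<noteq> {}} = {M\<in>{M\<in>L0. p \<in> M}. M \<inter> K \<noteq> {}}" by auto
  show "card {M\<in>L0. p \<in> M \<and> M \<inter> K \<noteq> {}} = 2"
    using K
  proof (rule L0_cases)
    fix c assume Kc: "K = rowL c"
    then have "a \<noteq> c" using pK p mem_row by auto
    then have h: "rowL a \<inter> K = {}" "colL b \<inter> K \<noteq> {}" "symL (z2add a b) \<inter> K \<noteq> {}"
      using Kc int_rr[of a c] int_rc[of c b] int_rs[of c "z2add a b"] by (auto simp: Int_commute)
    have "{M\<in>L0. p \<in> M \<and> M \<inter> K \<noteq> {}} = {colL b, symL (z2add a b)}"
      unfolding e lines_through using h p by auto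
    then show ?thesis using ne_cs by simp
  next
    fix c assume Kc: "K = colL c"
    then have "b \<noteq> c" using pK p mem_col by auto
    then have h: "colL b \<inter> K = {}" "rowL a \<inter> K \<noteq> {}" "symL (z2add a b) \<inter> K \<noteq> {}"
      using Kc int_cc[of b c] int_rc[of a c] int_cs[of c "z2add a b"] by (auto simp: Int_commute)
    have "{M\<in>L0. p \<in> M \<and> M \<inter> K \<noteq> {}} = {rowL a, symL (z2add a b)}"
      unfolding e lines_through using h p by auto
    then show ?thesis using ne_rs by simp
  next
    fix c assume Kc: "K = symL c"
    then have "z2add a b \<noteq> c" using pK p mem_sym by auto
    then have h: "symL (z2add a b) \<inter> K = {}" "rowL a \<inter> K \<noteq> {}" "colL b \<inter> K \<noteq> {}"
      using Kc int_ss[of "z2add a b" c] int_rs[of a c] int_cs[of b c] by auto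
    have "{M\<in>L0. p \<in> M \<and> M \<inter> K \<noteq> {}} = {rowL a, colL b}"
      unfolding e lines_through using h p by auto
    then show ?thesis using ne_rc by simp
  qed
qed

lemma adj0: "point_adj L0 u v \<longleftrightarrow> ls_adj u v"
proof -
  obtain a b a' b' where uv: "u = (a, b)" "v = (a', b')" by (cases u; cases v)
  have r: "(\<exists>M\<in>range rowL. u \<in> M \<and> v \<in> M) \<longleftrightarrow> a = a'" unfolding uv by (auto simp: mem_row)
  have c: "(\<exists>M\<in>range colL. u \<in> M \<and> v \<in> M) \<longleftrightarrow> b = b'" unfolding uv by (auto simp: mem_col)
  have s: "(\<exists>M\<in>range symL. u \<in> M \<and> v \<in> M) \<longleftrightarrow> z2add a b = z2add a' b'" unfolding uv by (auto simp: mem_sym)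
  have "(\<exists>M\<in>L0. u \<in> M \<and> v \<in> M) \<longleftrightarrow> (a = a' \<or> b = b' \<or> z2add a b = z2add a' b')"
    unfolding L0_def bex_Un r c s by (simp only: disj_assoc)
  then show ?thesis unfolding point_adj_def ls_adj_simp uv by simp
qed




definition okT :: "z2cube\<times>z2cube \<Rightarrow> z2cube\<times>z2cube \<Rightarrow> z2cube\<times>z2cube \<Rightarrow> bool" where
  "okT u v w \<longleftrightarrow> (\<forall>p q r. \<exists>z. z \<noteq> u \<and> z \<noteq> v \<and> z \<noteq> w \<and> ls_adj z u = p \<and> ls_adj z v = q \<and> ls_adj z w = r)"

lemma ec_from_okT:
  assumes h: "\<And>u v w. u \<noteq> v \<Longrightarrow> u \<noteq> w \<Longrightarrow> v \<noteq> w \<Longrightarrow> okT u v w"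
  shows "n_ec (UNIV :: (z2cube\<times>z2cube) set) ls_adj 3"
  unfolding n_ec_def
proof (intro allI impI)
  fix A B :: "(z2cube\<times>z2cube) set"
  assume ab: "A \<subseteq> UNIV \<and> B \<subseteq> UNIV \<and> A \<inter> B = {} \<and> finite (A \<union> B) \<and> card (A \<union> B) = 3"
  then obtain u v w where uvw: "A \<union> B = {u, v, w}" "u \<noteq> v" "v \<noteq> w" "u \<noteq> w"
    unfolding card_3_iff by blast
  obtain z where z: "z \<noteq> u" "z \<noteq> v" "z \<noteq> w" "ls_adj z u = (u \<in> A)" "ls_adj z v = (v \<in> A)" "ls_adj z w = (w \<in> A)"
    using h[OF uvw(2) uvw(4) uvw(3), unfolded okT_def, rule_format, of "u \<in> A" "v \<in> A" "w \<in> A"] by blast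
  have dis: "A \<inter> B = {}" using ab by simp
  have zn: "z \<notin> A \<union> B" using z uvw by simp
  have "\<forall>a\<in>A. ls_adj z a"
  proof
    fix a assume a: "a \<in> A"
    then have "a = u \<or> a = v \<or> a = w" using uvw(1) by blast
    then show "ls_adj z a" using z a by auto
  qed
  moreover have "\<forall>b\<in>B. \<not> ls_adj z b"
  proof
    fix b assume b: "b \<in> B"
    then have "b \<notin> A" using dis by blast
    moreover have "b = u \<or> b = v \<or> b = w" using b uvw(1) by blast
    ultimately show "\<not> ls_adj z b" using z by auto
  qed
  ultimately show "\<exists>z\<in>UNIV. z \<notin> A \<union> B \<and> (\<forall>a\<in>A. ls_adj z a) \<and> (\<forall>b\<in>B. \<not> ls_adj z b)"
    using zn by blast
qed

definition aut :: "(z2cube\<times>z2cube \<Rightarrow> z2cube\<times>z2cube) \<Rightarrow> bool" where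
  "aut h \<longleftrightarrow> bij h \<and> (\<forall>u v. ls_adj (h u) (h v) = ls_adj u v)"

lemma okT_aut: assumes "aut h" "okT u v w" shows "okT (h u) (h v) (h w)"
  unfolding okT_def
proof (intro allI)
  fix p q r
  obtain z where z: "z \<noteq> u" "z \<noteq> v" "z \<noteq> w" "ls_adj z u = p" "ls_adj z v = q" "ls_adj z w = r"
    using assms(2)[unfolded okT_def, rule_format, of p q r] by blast
  have inj: "inj h" using assms(1) unfolding aut_def bij_def by simp
  have pr: "\<And>x y. ls_adj (h x) (h y) = ls_adj x y" using assms(1) unfolding aut_def by blast
  show "\<exists>z. z \<noteq> h u \<and> z \<noteq> h v \<and> z \<noteq> h w \<and> ls_adj z (h u) = p \<and> ls_adj z (h v) = q \<and> ls_adj z (h w) = r"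
    by (rule exI[of _ "h z"]) (simp add: pr z inj_eq[OF inj])
qed

lemma aut_comp: assumes "aut f" "aut g" shows "aut (f \<circ> g)"
proof -
  have "bij (f \<circ> g)" using assms bij_comp unfolding aut_def by blast
  moreover have "\<forall>u v. ls_adj ((f \<circ> g) u) ((f \<circ> g) v) = ls_adj u v" using assms unfolding aut_def comp_def by blast
  ultimately show ?thesis unfolding aut_def by blast
qed

lemma invol_bij: "(\<And>x. f (f x) = x) \<Longrightarrow> bij f"
  by (metis bijI' )

definition tr :: "z2cube\<times>z2cube \<Rightarrow> z2cube\<times>z2cube \<Rightarrow> z2cube\<times>z2cube" where
  "tr t x = (z2add (fst x) (fst t), z2add (snd x) (snd t))"

lemma tr_tr: "tr t (tr t x) = x" unfolding tr_def by (simp add: z2add_assoc)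
lemma tr_self: "tr t t = (zz, zz)" unfolding tr_def by simp
lemma z2add_4: "z2add (z2add a t1) (z2add b t2) = z2add (z2add a b) (z2add t1 t2)"
  by (metis z2add_assoc z2add_lcomm)

lemma aut_tr: "aut (tr t)"
  unfolding aut_def
proof (intro conjI allI)
  show "bij (tr t)" by (rule invol_bij) (rule tr_tr)
  fix u v :: "z2cube\<times>z2cube"
  obtain a b a' b' where uv: "u = (a, b)" "v = (a', b')" by (cases u; cases v)
  show "ls_adj (tr t u) (tr t v) = ls_adj u v"
    unfolding uv tr_def by (simp add: ls_adj_simp z2add_4)
qed

definition sel :: "bool \<Rightarrow> z2cube \<Rightarrow> z2cube" where "sel b e = (if b then e else zz)"
definition lin :: "z2cube \<Rightarrow> z2cube \<Rightarrow> z2cube \<Rightarrow> z2cube \<Rightarrow> z2cube" where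
  "lin a b c x = (case x of (x1, x2, x3) \<Rightarrow> z2add (z2add (sel x1 a) (sel x2 b)) (sel x3 c))"

lemma sel_add: "z2add (sel p e) (sel q e) = sel (p \<noteq> q) e" unfolding sel_def by auto
lemma medial: "z2add (z2add p q) (z2add r s) = z2add (z2add p r) (z2add q s)"
  by (metis z2add_assoc z2add_lcomm)

lemma lin_add: "lin a b c (z2add x y) = z2add (lin a b c x) (lin a b c y)"
proof -
  obtain x1 x2 x3 where x: "x = (x1,x2,x3)" by (cases x) auto
  obtain y1 y2 y3 where y: "y = (y1,y2,y3)" by (cases y) auto
  have "z2add (lin a b c x) (lin a b c y) =
     z2add (z2add (z2add (sel x1 a) (sel x2 b)) (sel x3 c)) (z2add (z2add (sel y1 a) (sel y2 b)) (sel y3 c))"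
    unfolding x y lin_def by simp
  also have "\<dots> = z2add (z2add (z2add (sel x1 a) (sel x2 b)) (z2add (sel y1 a) (sel y2 b))) (z2add (sel x3 c) (sel y3 c))"
    by (rule medial)
  also have "\<dots> = z2add (z2add (z2add (sel x1 a) (sel y1 a)) (z2add (sel x2 b) (sel y2 b))) (z2add (sel x3 c) (sel y3 c))"
    by (simp only: medial[of "sel x1 a" "sel x2 b"])
  also have "\<dots> = lin a b c (z2add x y)"
    unfolding x y lin_def z2add_def[of "(x1,x2,x3)"] sel_add by simp
  finally show ?thesis by simp
qed

definition indep where "indep a b c \<longleftrightarrow> a \<noteq> zz \<and> b \<noteq> zz \<and> a \<noteq> b \<and> c \<noteq> zz \<and> c \<noteq> a \<and> c \<noteq> b \<and> c \<noteq> z2add a b"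

lemma lin_zz: "lin a b c zz = zz" unfolding lin_def zz_def sel_def by simp
lemma lin_e1: "lin a b c (True, False, False) = a" unfolding lin_def sel_def by simp
lemma lin_e2: "lin a b c (False, True, False) = b" unfolding lin_def sel_def by simp

lemma lin_inj: assumes "indep a b c" shows "inj (lin a b c)"
proof (rule injI)
  fix x y assume h: "lin a b c x = lin a b c y"
  have z: "lin a b c (z2add x y) = zz" using h lin_add by simp
  obtain w1 w2 w3 where w: "z2add x y = (w1,w2,w3)" by (cases "z2add x y") auto
  have nz: "z2add a b \<noteq> zz" "z2add a c \<noteq> zz" "z2add b c \<noteq> zz" "z2add (z2add a b) c \<noteq> zz"
    using assms unfolding indep_def by (auto simp: z2add_eq_zz)
  have ia: "a \<noteq> zz" "b \<noteq> zz" "c \<noteq> zz" "c \<noteq> z2add a b" using assms unfolding indep_def by auto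
  have "\<not> w1 \<and> \<not> w2 \<and> \<not> w3" using z unfolding w lin_def sel_def
    by (cases w1; cases w2; cases w3) (simp_all add: nz ia)
  then have "z2add x y = zz" using w unfolding zz_def by simp
  then show "x = y" by (simp add: z2add_eq_zz)
qed

definition gl :: "(z2cube \<Rightarrow> z2cube) \<Rightarrow> z2cube\<times>z2cube \<Rightarrow> z2cube\<times>z2cube" where
  "gl M x = (M (fst x), M (snd x))"

lemma aut_gl: assumes "indep a b c" shows "aut (gl (lin a b c))"
  unfolding aut_def
proof (intro conjI allI)
  let ?M = "lin a b c"
  have inj: "inj ?M" using lin_inj[OF assms] .
  have ig: "inj (gl ?M)"
  proof (rule injI)
    fix x y assume "gl ?M x = gl ?M y"
    then have "?M (fst x) = ?M (fst y)" "?M (snd x) = ?M (snd y)" unfolding gl_def by simp_all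
    then have "fst x = fst y" "snd x = snd y" using inj_eq[OF inj] by blast+
    then show "x = y" by (rule prod_eqI)
  qed
  show "bij (gl ?M)" unfolding bij_def using ig finite_UNIV_inj_surj[OF finite ig] by blast
  fix u v :: "z2cube\<times>z2cube"
  obtain p q p' q' where uv: "u = (p, q)" "v = (p', q')" by (cases u; cases v)
  have k1: "z2add (?M p) (?M q) = z2add (?M p') (?M q') \<longleftrightarrow> z2add p q = z2add p' q'"
    by (simp only: lin_add[symmetric] inj_eq[OF inj])
  have k2: "?M p = ?M p' \<longleftrightarrow> p = p'" "?M q = ?M q' \<longleftrightarrow> q = q'" by (simp_all only: inj_eq[OF inj])
  have k3: "(?M p, ?M q) \<noteq> (?M p', ?M q') \<longleftrightarrow> (p, q) \<noteq> (p', q')" using k2 by simp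
  show "ls_adj (gl ?M u) (gl ?M v) = ls_adj u v"
    unfolding uv gl_def fst_conv snd_conv ls_adj_simp k1 k2 k3 by (rule refl)
qed

definition s1 :: "z2cube\<times>z2cube \<Rightarrow> z2cube\<times>z2cube" where "s1 x = (snd x, fst x)"
definition s2 :: "z2cube\<times>z2cube \<Rightarrow> z2cube\<times>z2cube" where "s2 x = (fst x, z2add (fst x) (snd x))"

lemma aut_s1: "aut s1"
  unfolding aut_def
proof (intro conjI allI)
  show "bij s1" by (rule invol_bij) (simp add: s1_def)
  fix u v :: "z2cube\<times>z2cube"
  obtain a b a' b' where uv: "u = (a, b)" "v = (a', b')" by (cases u; cases v)
  show "ls_adj (s1 u) (s1 v) = ls_adj u v"
    unfolding uv s1_def by (auto simp: ls_adj_simp z2add_comm)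
qed

lemma aut_s2: "aut s2"
  unfolding aut_def
proof (intro conjI allI)
  show "bij s2" by (rule invol_bij) (simp add: s2_def)
  fix u v :: "z2cube\<times>z2cube"
  obtain a b a' b' where uv: "u = (a, b)" "v = (a', b')" by (cases u; cases v)
  show "ls_adj (s2 u) (s2 v) = ls_adj u v"
    unfolding uv s2_def by (cases "a = a'") (auto simp: ls_adj_simp)
qed

lemma ex_notin: "card (S :: z2cube set) < 8 \<Longrightarrow> \<exists>c. c \<notin> S"
  using card_mono[of S UNIV] card_z2' by (metis UNIV_I finite subsetI not_le subset_antisym order_refl)

lemma ex_indep3: assumes "a \<noteq> zz" "b \<noteq> zz" "a \<noteq> b" shows "\<exists>c. indep a b c"
proof -
  have "card {zz, a, b, z2add a b} < 8" using card_insert_le_m1 by (simp add: card_insert_if)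
  then obtain c where "c \<notin> {zz, a, b, z2add a b}" using ex_notin by blast
  then have "indep a b c" using assms unfolding indep_def by auto
  then show ?thesis by blast
qed

lemma ex_indep1: assumes "a \<noteq> zz" shows "\<exists>b c. indep a b c"
proof -
  have "card {zz, a} < 8" by (simp add: card_insert_if)
  then obtain b where "b \<notin> {zz, a}" using ex_notin by blast
  then obtain c where "indep a b c" using ex_indep3[of a b] assms by auto
  then show ?thesis by blast
qed

definition e1 :: z2cube where "e1 = (True, False, False)"
definition e2 :: z2cube where "e2 = (False, True, False)"
definition r1 where "r1 = (zz, e1)"
definition r2 where "r2 = (e1, e2)"

lemma orbit: assumes v: "v \<noteq> (zz, zz)"
  shows "\<exists>h. aut h \<and> h (zz, zz) = (zz, zz) \<and> (v = h r1 \<or> v = h r2)"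
proof -
  obtain a b where ab: "v = (a, b)" by (cases v)
  have glz: "gl (lin p q r) (zz, zz) = (zz, zz)" for p q r unfolding gl_def by (simp add: lin_zz)
  show ?thesis
  proof (cases "a = zz")
    case True
    then have "b \<noteq> zz" using v ab by simp
    then obtain c d where i: "indep b c d" using ex_indep1 by blast
    have "v = gl (lin b c d) r1" unfolding r1_def gl_def e1_def using ab True by (simp add: lin_zz lin_e1)
    then show ?thesis using aut_gl[OF i] glz by blast
  next
    case an: False
    show ?thesis
    proof (cases "b = zz")
      case True
      obtain c d where i: "indep a c d" using ex_indep1[OF an] by blast
      have "v = (s1 \<circ> gl (lin a c d)) r1" unfolding r1_def gl_def e1_def s1_def using ab True by (simp add: lin_zz lin_e1)
      moreover have "(s1 \<circ> gl (lin a c d)) (zz, zz) = (zz, zz)" using glz by (simp add: s1_def)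
      ultimately show ?thesis using aut_comp[OF aut_s1 aut_gl[OF i]] by blast
    next
      case bn: False
      show ?thesis
      proof (cases "a = b")
        case True
        obtain c d where i: "indep a c d" using ex_indep1[OF an] by blast
        have "v = (s2 \<circ> s1 \<circ> gl (lin a c d)) r1" unfolding r1_def gl_def e1_def s1_def s2_def using ab True by (simp add: lin_zz lin_e1)
        moreover have "(s2 \<circ> s1 \<circ> gl (lin a c d)) (zz, zz) = (zz, zz)" using glz by (simp add: s1_def s2_def)
        ultimately show ?thesis using aut_comp[OF aut_comp[OF aut_s2 aut_s1] aut_gl[OF i]] by blast
      next
        case False
        obtain c where i: "indep a b c" using ex_indep3[OF an bn False] by blast
        have "v = gl (lin a b c) r2" unfolding r2_def gl_def e1_def e2_def using ab by (simp add: lin_e1 lin_e2)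
        then show ?thesis using aut_gl[OF i] glz by blast
      qed
    qed
  qed
qed

lemma sym_main:
  assumes c1: "\<And>w. w \<noteq> (zz, zz) \<Longrightarrow> w \<noteq> r1 \<Longrightarrow> okT (zz, zz) r1 w"
    and c2: "\<And>w. w \<noteq> (zz, zz) \<Longrightarrow> w \<noteq> r2 \<Longrightarrow> okT (zz, zz) r2 w"
  shows "n_ec (UNIV :: (z2cube\<times>z2cube) set) ls_adj 3"
proof (rule ec_from_okT)
  fix u v w :: "z2cube\<times>z2cube" assume d: "u \<noteq> v" "u \<noteq> w" "v \<noteq> w"
  have injt: "inj (tr u)" using aut_tr unfolding aut_def bij_def by simp
  have v': "tr u v \<noteq> (zz, zz)" using d(1) tr_self[of u] inj_eq[OF injt] by metis
  obtain h where h: "aut h" "h (zz, zz) = (zz, zz)" "tr u v = h r1 \<or> tr u v = h r2"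
    using orbit[OF v'] by blast
  have bh: "bij h" and injh: "inj h" using h(1) unfolding aut_def bij_def by auto
  obtain w'' where w'': "h w'' = tr u w" using bh unfolding bij_def surj_def by metis
  have w0: "w'' \<noteq> (zz, zz)" using w'' h(2) d(2) tr_self[of u] inj_eq[OF injt] by metis
  have key: "okT (zz, zz) (tr u v) (tr u w)"
  proof (cases "tr u v = h r1")
    case True
    have "w'' \<noteq> r1" using w'' True d(3) inj_eq[OF injt] by metis
    then have "okT (zz, zz) r1 w''" using c1 w0 by blast
    then show ?thesis using okT_aut[OF h(1)] h(2) True w'' by metis
  next
    case False
    then have T: "tr u v = h r2" using h(3) by simp
    have "w'' \<noteq> r2" using w'' T d(3) inj_eq[OF injt] by metis
    then have "okT (zz, zz) r2 w''" using c2 w0 by blast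
    then show ?thesis using okT_aut[OF h(1)] h(2) T w'' by metis
  qed
  have "okT (tr u (zz, zz)) (tr u (tr u v)) (tr u (tr u w))"
    using okT_aut[OF aut_tr key] .
  moreover have "tr u (zz, zz) = u" using tr_self[of u] tr_tr[of u u] by simp
  ultimately show "okT u v w" by (simp add: tr_tr)
qed




definition bs :: "bool list" where "bs = [False, True]"
definition allG :: "z2cube list" where "allG = [(a,b,c). a <- bs, b <- bs, c <- bs]"
definition allV :: "(z2cube\<times>z2cube) list" where "allV = [(a,b). a <- allG, b <- allG]"
definition allPat :: "(bool\<times>bool\<times>bool) list" where "allPat = [(p,q,r). p <- bs, q <- bs, r <- bs]"
fun xr :: "z2cube \<Rightarrow> z2cube \<Rightarrow> z2cube" where "xr (a1,a2,a3) (b1,b2,b3) = (a1\<noteq>b1, a2\<noteq>b2, a3\<noteq>b3)"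
fun adjf :: "z2cube\<times>z2cube \<Rightarrow> z2cube\<times>z2cube \<Rightarrow> bool" where
  "adjf (a,b) (c,d) = (a = c \<or> b = d \<or> xr a b = xr c d)"
definition okl where
  "okl u v w = (let ps = map (\<lambda>z. (adjf z u, adjf z v, adjf z w)) (filter (\<lambda>z. z\<noteq>u \<and> z\<noteq>v \<and> z\<noteq>w) allV) in
     list_all (\<lambda>p. p \<in> set ps) allPat)"

lemma xr_eq: "xr a b = z2add a b" by (cases a; cases b) (simp add: z2add_def)
lemma adjf_eq: "z \<noteq> u \<Longrightarrow> ls_adj z u = adjf z u"
  by (cases z; cases u) (simp add: ls_adj_simp xr_eq)

lemma setG: "set allG = UNIV"
proof -
  have "x \<in> set allG" for x by (cases x) (auto simp: allG_def bs_def)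
  then show ?thesis by auto
qed
lemma setV: "set allV = UNIV"
  unfolding allV_def using setG by auto
lemma setPat: "(p, q, r) \<in> set allPat"
  by (auto simp: allPat_def bs_def)

lemma okl_okT: assumes "okl u v w" shows "okT u v w"
  unfolding okT_def
proof (intro allI)
  fix p q r
  have "(p, q, r) \<in> set (map (\<lambda>z. (adjf z u, adjf z v, adjf z w)) (filter (\<lambda>z. z\<noteq>u \<and> z\<noteq>v \<and> z\<noteq>w) allV))"
    using assms setPat unfolding okl_def Let_def list_all_iff by blast
  then obtain z where z: "z \<noteq> u" "z \<noteq> v" "z \<noteq> w" "adjf z u = p" "adjf z v = q" "adjf z w = r" by auto
  show "\<exists>z. z \<noteq> u \<and> z \<noteq> v \<and> z \<noteq> w \<and> ls_adj z u = p \<and> ls_adj z v = q \<and> ls_adj z w = r"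
    using z adjf_eq by blast
qed

lemma chk1: "list_all (\<lambda>w. w = (zz, zz) \<or> w = r1 \<or> okl (zz, zz) r1 w) allV"
  unfolding r1_def e1_def zz_def by code_simp
lemma chk2: "list_all (\<lambda>w. w = (zz, zz) \<or> w = r2 \<or> okl (zz, zz) r2 w) allV"
  unfolding r2_def e1_def e2_def zz_def by code_simp

lemma ec0: "n_ec (UNIV :: (z2cube\<times>z2cube) set) ls_adj 3"
proof (rule sym_main)
  fix w :: "z2cube\<times>z2cube" assume "w \<noteq> (zz, zz)" "w \<noteq> r1"
  then show "okT (zz, zz) r1 w" using chk1 setV okl_okT unfolding list_all_iff by blast
next
  fix w :: "z2cube\<times>z2cube" assume "w \<noteq> (zz, zz)" "w \<noteq> r2"
  then show "okT (zz, zz) r2 w" using chk2 setV okl_okT unfolding list_all_iff by blast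
qed


theorem mainTheorem9:
  shows "(\<exists>L. partial_geometry (UNIV :: (z2cube \<times> z2cube) set) L 7 2 2
              \<and> (\<forall>u v. point_adj L u v \<longleftrightarrow> ls_adj u v))
         \<and> n_ec (UNIV :: (z2cube \<times> z2cube) set) ls_adj 3
         \<and> (\<forall>(P :: 'p set) L s. s \<ge> 2 \<and> partial_geometry P L s 2 2 \<and> n_ec P (point_adj L) 3
              \<longrightarrow> s = 7 \<and> graph_iso P (point_adj L) (UNIV :: (z2cube \<times> z2cube) set) ls_adj)"
proof -
  have A: "\<exists>L. partial_geometry (UNIV :: (z2cube \<times> z2cube) set) L 7 2 2
              \<and> (\<forall>u v. point_adj L u v \<longleftrightarrow> ls_adj u v)"
    using pg0 adj0 by blast
  have B: "\<forall>(P :: 'p set) L s. s \<ge> 2 \<and> partial_geometry P L s 2 2 \<and> n_ec P (point_adj L) 3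
              \<longrightarrow> s = 7 \<and> graph_iso P (point_adj L) (UNIV :: (z2cube \<times> z2cube) set) ls_adj"
  proof (intro allI impI)
    fix P :: "'p set" and L s
    assume h: "s \<ge> 2 \<and> partial_geometry P L s 2 2 \<and> n_ec P (point_adj L) 3"
    interpret pg22 P L s using h by (simp add: pg22_def)
    show "s = 7 \<and> graph_iso P (point_adj L) (UNIV :: (z2cube \<times> z2cube) set) ls_adj"
      using pg_main h by blast
  qed
  show ?thesis using A ec0 B by blast
qed

end
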